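(* Let $j^\star=\left\lfloor-\frac{\log(1-\lambda)}{\log(\lambda d+1)}\right\rfloor$ and assume $I>j^\star$. There exists a unique fixed point $x^\star$. It satisfies $x^\star_{\cdot,j^\star}+x^\star_{\cdot,j^\star+1}=1$ (so $x^\star_{i,j}=0$ whenever $j\notin\{j^\star,j^\star+1\}$), and $$\lambda d\,x^\star_{0,j^\star}=(1+\lambda d)(1-\lambda)-\frac{1}{(1+\lambda d)^{j^\star}},\qquad x^\star_{0,j^\star}+x^\star_{0,j^\star+1}=1-\lambda.$$
   Context: Fix $\lambda\in(0,1)$, an integer $d\ge2$ and an integer $I>1$. $\mathcal S=\{x=(x_{i,j})_{0\le i\le j\le I}: x_{i,j}\ge0,\ \sum_{i=0}^I\sum_{j=i}^I x_{i,j}=1\}$; $x_{i,\cdot}=\sum_{j=i}^I x_{i,j}$, $x_{\cdot,j}=\sum_{i=0}^j x_{i,j}$. For $0\le j\le I$: $\mathcal R_j(x)=\max\{0,\lambda(1-d\sum_{i=0}^j(j+1-i)x_{i,\cdot})\}\,\mathbf 1\{\sum_{i=0}^j x_{\cdot,i}=0\}$, $\mathcal G_j(x)=\lambda d\,\mathbf 1\{\sum_{i=0}^j x_{\cdot,i}=0,\ d\sum_{i=0}^j(j+1-i)x_{i,\cdot}\le1\}\sum_{i=0}^j x_{i,\cdot}$. Write $\rho_k^{a,b}(x)=\mathcal R_k(x)\frac{x_{a,b}}{x_{\cdot,b}}\mathbf 1\{x_{\cdot,b}>0\}$ (equal to $0$ when $x_{\cdot,b}=0$). The drift $b(x)$ is: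 $b_{0,0}=\lambda d(x_{0,\cdot}-x_{0,0})-\lambda+\mathcal R_0(x)$; for $i<j$: $b_{i,j}=x_{i+1,j}-\mathbf 1\{i>0\}x_{i,j}-\lambda d x_{i,j}-\rho_{j-1}^{i,j}+\mathbf 1\{i>0\}\rho_{j-2}^{i-1,j-1}+\mathbf 1\{j=I,i>0\}\rho_{I-1}^{i-1,I}$; $b_{1,1}=-x_{1,1}+\lambda d(x_{1,\cdot}-x_{1,1})+\lambda-\mathcal R_0(x)-\rho_0^{1,1}-\mathcal G_1(x)$; for $2\le i\le I-1$: $b_{i,i}=-x_{i,i}+\lambda d(x_{i,\cdot}-x_{i,i})-\rho_{i-1}^{i,i}+\rho_{i-2}^{i-1,i-1}+\mathcal G_{i-1}(x)-\mathcal G_i(x)$; $b_{I,I}=-x_{I,I}+\rho_{I-2}^{I-1,I-1}+\mathcal G_{I-1}(x)+\rho_{I-1}^{I-1,I}$. A fluid solution is an absolutely continuous $x:\mathbb R_+\to\mathcal S$ with $\dot x_{i,j}(t)=b_{i,j}(x(t))$ for a.e. $t$ and all $i\le j$. A fixed point is a fluid solution with $b(x(t))=0$ for all $t\ge0$ (hence constant, identified with a point of $\mathcal S$). *)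

theory Defs
  imports Complex_Main
begin

text \<open>States are functions x :: nat \<Rightarrow> nat \<Rightarrow> real, where x i j is the entry x_{i,j}
  for 0 \<le> i \<le> j \<le> I; entries outside this triangle are required to vanish,
  so that points of the state space S correspond bijectively to such functions.\<close>

definition simplexS :: "nat \<Rightarrow> (nat \<Rightarrow> nat \<Rightarrow> real) set" where
  "simplexS I = {x. (\<forall>i j. 0 \<le> x i j) \<and> (\<forall>i j. \<not> (i \<le> j \<and> j \<le> I) \<longrightarrow> x i j = 0)
                    \<and> (\<Sum>i=0..I. \<Sum>j=i..I. x i j) = 1}"

definition row :: "nat \<Rightarrow> (nat \<Rightarrow> nat \<Rightarrow> real) \<Rightarrow> nat \<Rightarrow> real" where
  "row I x i = (\<Sum>j=i..I. x i j)"

definition col :: "(nat \<Rightarrow> nat \<Rightarrow> real) \<Rightarrow> nat \<Rightarrow> real" where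
  "col x j = (\<Sum>i=0..j. x i j)"

definition Rfun :: "real \<Rightarrow> nat \<Rightarrow> nat \<Rightarrow> (nat \<Rightarrow> nat \<Rightarrow> real) \<Rightarrow> nat \<Rightarrow> real" where
  "Rfun lam d I x j =
     (if (\<Sum>i=0..j. col x i) = 0
      then max 0 (lam * (1 - real d * (\<Sum>i=0..j. (real (j+1) - real i) * row I x i)))
      else 0)"

definition Gfun :: "real \<Rightarrow> nat \<Rightarrow> nat \<Rightarrow> (nat \<Rightarrow> nat \<Rightarrow> real) \<Rightarrow> nat \<Rightarrow> real" where
  "Gfun lam d I x j =
     lam * real d *
     (if (\<Sum>i=0..j. col x i) = 0 \<and> real d * (\<Sum>i=0..j. (real (j+1) - real i) * row I x i) \<le> 1
      then (\<Sum>i=0..j. row I x i) else 0)"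

definition rho :: "real \<Rightarrow> nat \<Rightarrow> nat \<Rightarrow> (nat \<Rightarrow> nat \<Rightarrow> real) \<Rightarrow> nat \<Rightarrow> nat \<Rightarrow> nat \<Rightarrow> real" where
  "rho lam d I x k a b = (if col x b > 0 then Rfun lam d I x k * x a b / col x b else 0)"

definition drift :: "real \<Rightarrow> nat \<Rightarrow> nat \<Rightarrow> (nat \<Rightarrow> nat \<Rightarrow> real) \<Rightarrow> nat \<Rightarrow> nat \<Rightarrow> real" where
  "drift lam d I x i j =
    (if i = 0 \<and> j = 0 then
        lam * real d * (row I x 0 - x 0 0) - lam + Rfun lam d I x 0
     else if i < j then
        x (i+1) j - (if i > 0 then x i j else 0) - lam * real d * x i j
        - rho lam d I x (j-1) i j
        + (if i > 0 then rho lam d I x (j-2) (i-1) (j-1) else 0)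
        + (if j = I \<and> i > 0 then rho lam d I x (I-1) (i-1) I else 0)
     else if i = 1 \<and> j = 1 then
        - x 1 1 + lam * real d * (row I x 1 - x 1 1) + lam - Rfun lam d I x 0
        - rho lam d I x 0 1 1 - Gfun lam d I x 1
     else if i = j \<and> 2 \<le> i \<and> i \<le> I - 1 then
        - x i i + lam * real d * (row I x i - x i i) - rho lam d I x (i-1) i i
        + rho lam d I x (i-2) (i-1) (i-1) + Gfun lam d I x (i-1) - Gfun lam d I x i
     else if i = I \<and> j = I then
        - x I I + rho lam d I x (I-2) (I-1) (I-1) + Gfun lam d I x (I-1)
        + rho lam d I x (I-1) (I-1) I
     else 0)"

definition fixed_point :: "real \<Rightarrow> nat \<Rightarrow> nat \<Rightarrow> (nat \<Rightarrow> nat \<Rightarrow> real) \<Rightarrow> bool" where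
  "fixed_point lam d I x \<longleftrightarrow>
     x \<in> simplexS I \<and> (\<forall>i j. i \<le> j \<longrightarrow> j \<le> I \<longrightarrow> drift lam d I x i j = 0)"

end

theory Submission
  imports Defs
begin


definition CS :: "(nat \<Rightarrow> nat \<Rightarrow> real) \<Rightarrow> nat \<Rightarrow> real" where
  "CS x k = (\<Sum>i=0..k. col x i)"
definition Tc :: "nat \<Rightarrow> (nat \<Rightarrow> nat \<Rightarrow> real) \<Rightarrow> nat \<Rightarrow> real" where
  "Tc I x k = (\<Sum>i=0..k. row I x i)"
definition Sc :: "nat \<Rightarrow> (nat \<Rightarrow> nat \<Rightarrow> real) \<Rightarrow> nat \<Rightarrow> real" where
  "Sc I x k = (\<Sum>i=0..k. (real (k+1) - real i) * row I x i)"

lemma Sc_Tc: "Sc I x k = (\<Sum>j=0..k. Tc I x j)"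
proof (induction k)
  case 0 then show ?case by (simp add: Sc_def Tc_def)
next
  case (Suc k)
  have "Sc I x (Suc k) = (\<Sum>i=0..Suc k. (real (k+1) - real i) * row I x i + row I x i)"
    unfolding Sc_def by (rule sum.cong) (auto simp: algebra_simps)
  also have "\<dots> = (\<Sum>i=0..Suc k. (real (k+1) - real i) * row I x i) + Tc I x (Suc k)"
    by (simp add: sum.distrib Tc_def)
  also have "(\<Sum>i=0..Suc k. (real (k+1) - real i) * row I x i) = Sc I x k"
    by (simp add: Sc_def)
  finally show ?case using Suc by simp
qed

lemma simplex_nonneg: "x \<in> simplexS I \<Longrightarrow> 0 \<le> x i j"
  by (simp add: simplexS_def)
lemma simplex_zero: "x \<in> simplexS I \<Longrightarrow> \<not> (i \<le> j \<and> j \<le> I) \<Longrightarrow> x i j = 0"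
  by (simp add: simplexS_def)

lemma col_nonneg: "x \<in> simplexS I \<Longrightarrow> 0 \<le> col x j"
  unfolding col_def by (rule sum_nonneg) (simp add: simplex_nonneg)
lemma row_nonneg: "x \<in> simplexS I \<Longrightarrow> 0 \<le> row I x j"
  unfolding row_def by (rule sum_nonneg) (simp add: simplex_nonneg)

lemma total_col: assumes "x \<in> simplexS I" shows "(\<Sum>j=0..I. col x j) = 1"
proof -
  have "1 = (\<Sum>i=0..I. \<Sum>j=i..I. x i j)" using assms by (simp add: simplexS_def)
  also have "\<dots> = (\<Sum>i=0..I. \<Sum>j=0..I. x i j)"
  proof (rule sum.cong[OF refl])
    fix i assume "i \<in> {0..I}"
    show "(\<Sum>j=i..I. x i j) = (\<Sum>j=0..I. x i j)"
      by (rule sum.mono_neutral_left) (auto simp: simplex_zero[OF assms])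
  qed
  also have "\<dots> = (\<Sum>j=0..I. \<Sum>i=0..I. x i j)" by (rule sum.swap)
  also have "\<dots> = (\<Sum>j=0..I. col x j)" unfolding col_def
  proof (rule sum.cong[OF refl])
    fix j assume "j \<in> {0..I}"
    then show "(\<Sum>i=0..I. x i j) = (\<Sum>i=0..j. x i j)"
      by (intro sum.mono_neutral_right) (auto simp: simplex_zero[OF assms])
  qed
  finally show ?thesis by simp
qed

lemma col_zero_iff: assumes "x \<in> simplexS I" shows "col x j = 0 \<longleftrightarrow> (\<forall>i. x i j = 0)"
proof
  assume "col x j = 0"
  then have "\<forall>i\<in>{0..j}. x i j = 0" unfolding col_def
    by (subst (asm) sum_nonneg_eq_0_iff) (auto simp: simplex_nonneg[OF assms])
  then show "\<forall>i. x i j = 0" using simplex_zero[OF assms] by (metis atLeastAtMost_iff le0)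
qed (simp add: col_def)

lemma CS_ge: assumes "x \<in> simplexS I" "m \<le> k" shows "col x m \<le> CS x k"
  unfolding CS_def using assms
  by (intro member_le_sum) (auto simp: col_nonneg)

lemma CS_zero: assumes "\<And>j. j \<le> k \<Longrightarrow> col x j = 0" shows "CS x k = 0"
  unfolding CS_def using assms by simp

lemma Rfun_CS: "Rfun lam d I x k = (if CS x k = 0 then max 0 (lam * (1 - real d * Sc I x k)) else 0)"
  by (simp add: Rfun_def CS_def Sc_def)
lemma Gfun_CS: "Gfun lam d I x k = (if CS x k = 0 \<and> real d * Sc I x k \<le> 1 then lam * real d * Tc I x k else 0)"
  by (simp add: Gfun_def CS_def Sc_def Tc_def)

lemma Tc_mono: "x \<in> simplexS I \<Longrightarrow> j \<le> k \<Longrightarrow> Tc I x j \<le> Tc I x k"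
  unfolding Tc_def by (intro sum_mono2) (auto simp: row_nonneg)
lemma Tc_nonneg: "x \<in> simplexS I \<Longrightarrow> 0 \<le> Tc I x j"
  unfolding Tc_def by (intro sum_nonneg) (auto simp: row_nonneg)
lemma Sc_mono: "x \<in> simplexS I \<Longrightarrow> j \<le> k \<Longrightarrow> Sc I x j \<le> Sc I x k"
  unfolding Sc_Tc by (intro sum_mono2) (auto simp: Tc_nonneg)
lemma Sc_zero: assumes "x \<in> simplexS I" "Tc I x k = 0" shows "Sc I x k = 0"
proof -
  have "\<forall>j\<in>{0..k}. Tc I x j = 0"
    using Tc_mono[OF assms(1)] Tc_nonneg[OF assms(1)] assms(2) by (metis atLeastAtMost_iff order_antisym)
  then show ?thesis unfolding Sc_Tc by simp
qed
lemma Sc_0: "Sc I x 0 = row I x 0" by (simp add: Sc_def)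
lemma Tc_Suc: "Tc I x (Suc k) = Tc I x k + row I x (Suc k)" by (simp add: Tc_def)
lemma Tc_0: "Tc I x 0 = row I x 0" by (simp add: Tc_def)


definition shape :: "nat \<Rightarrow> (nat \<Rightarrow> nat \<Rightarrow> real) \<Rightarrow> bool" where
  "shape m x \<longleftrightarrow> (\<forall>i j. x i j \<noteq> 0 \<longrightarrow> (j = m \<and> i \<le> m) \<or> (j = Suc m \<and> i \<le> Suc m))"

locale shp =
  fixes I m :: nat and x :: "nat \<Rightarrow> nat \<Rightarrow> real"
  assumes sx: "x \<in> simplexS I" and sh: "shape m x" and cpos: "col x m > 0" and mI: "m \<le> I"
begin

lemma shape_eq: "x i j = (if j = m then x i m else 0) + (if j = Suc m then x i (Suc m) else 0)"
  using sh unfolding shape_def by (metis add.right_neutral add_0 n_not_Suc_n)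

lemma col_other: "j \<noteq> m \<Longrightarrow> j \<noteq> Suc m \<Longrightarrow> col x j = 0"
  unfolding col_def by (subst shape_eq) simp

lemma CS_iff: "CS x k = 0 \<longleftrightarrow> k < m"
proof
  assume "CS x k = 0"
  show "k < m"
  proof (rule ccontr)
    assume "\<not> k < m"
    then have "col x m \<le> CS x k" using CS_ge[OF sx] by simp
    with cpos \<open>CS x k = 0\<close> show False by simp
  qed
next
  assume "k < m" then show "CS x k = 0" by (intro CS_zero col_other) auto
qed

lemma row_shape: "row I x i = x i m + x i (Suc m)"
proof -
  have "row I x i = (\<Sum>j=i..I. (if j = m then x i m else 0) + (if j = Suc m then x i (Suc m) else 0))"
    unfolding row_def by (rule sum.cong[OF refl]) (rule shape_eq)
  also have "\<dots> = (if m \<in> {i..I} then x i m else 0) + (if Suc m \<in> {i..I} then x i (Suc m) else 0)"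
    by (simp add: sum.distrib)
  also have "\<dots> = x i m + x i (Suc m)"
    using sh simplex_zero[OF sx, of i "Suc m"] simplex_zero[OF sx, of i m] mI unfolding shape_def
    by (auto split: if_splits)
  finally show ?thesis .
qed

lemma R_shape: "Rfun lam d I x k = (if k < m then max 0 (lam * (1 - real d * Sc I x k)) else 0)"
  by (simp add: Rfun_CS CS_iff)

lemma G_shape: "Gfun lam d I x k = (if k < m \<and> real d * Sc I x k \<le> 1 then lam * real d * Tc I x k else 0)"
  by (simp add: Gfun_CS CS_iff)

lemma rho_shape: "rho lam d I x k a b =
   (if b = m \<and> k < m then Rfun lam d I x k * x a m / col x m
    else if b = Suc m \<and> k < m \<and> col x (Suc m) > 0 then Rfun lam d I x k * x a (Suc m) / col x (Suc m)
    else 0)"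
  using cpos col_other[of b] by (cases "b = m"; cases "b = Suc m") (auto simp: rho_def R_shape)

end


locale shp2 = shp +
  fixes lam :: real and d :: nat
  assumes m1: "1 \<le> m" and lam0: "0 < lam" and d1: "1 \<le> d"
begin

definition "q = Rfun lam d I x (m-1) / col x m"

lemma xz: "x i j = 0" if "j \<noteq> m" "j \<noteq> Suc m" using shape_eq[of i j] that by simp
lemma xz2: "x i m = 0" if "i > m" using simplex_zero[OF sx, of i m] that by simp
lemma xz3: "x i (Suc m) = 0" if "i > Suc m" using simplex_zero[OF sx, of i "Suc m"] that by simp

lemma rho_m: "rho lam d I x (m-1) a m = q * x a m"
  using m1 by (simp add: rho_shape q_def)

lemma rho_m': "rho lam d I x (m - Suc 0) a m = q * x a m" using rho_m by simp

lemma rho_0: "rho lam d I x k a b = 0" if "b \<noteq> m" "b \<noteq> Suc m"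
  using that by (simp add: rho_shape)
lemma rho_0': "rho lam d I x k a b = 0" if "m \<le> k"
  using that by (simp add: rho_shape)

lemma G_0': "Gfun lam d I x k = 0" if "m \<le> k" using that by (simp add: G_shape)

lemma drift_00: "drift lam d I x 0 0 = lam * real d * row I x 0 - lam + Rfun lam d I x 0"
  using xz[of 0 0] m1 unfolding drift_def by simp

lemma drift_11: assumes "1 < m"
  shows "drift lam d I x 1 1 = lam * real d * row I x 1 + lam - Rfun lam d I x 0 - Gfun lam d I x 1"
proof -
  have "rho lam d I x 0 1 1 = 0" using assms by (simp add: rho_0)
  then show ?thesis using xz[of 1 1] assms unfolding drift_def by simp
qed

lemma drift_kk: assumes "2 \<le> k" "k < m"
  shows "drift lam d I x k k = lam * real d * row I x k + Gfun lam d I x (k-1) - Gfun lam d I x k"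
proof -
  have "rho lam d I x (k-1) k k = 0" "rho lam d I x (k-2) (k-1) (k-1) = 0"
    using assms by (simp_all add: rho_0)
  moreover have "k \<le> I - 1" using assms mI by auto
  ultimately show ?thesis using xz[of k k] assms unfolding drift_def by simp
qed


lemma Gchain: assumes "\<forall>k<m. drift lam d I x k k = 0"
  shows "real d * Sc I x (m-1) \<le> 1 \<and> Rfun lam d I x (m-1) = lam - lam * real d * Sc I x (m-1)"
proof -
  have dpos: "0 < real d" using d1 by simp
  have R0: "Rfun lam d I x 0 = max 0 (lam * (1 - real d * row I x 0))"
    using m1 by (simp add: R_shape Sc_0)
  have e0: "lam * real d * row I x 0 - lam + Rfun lam d I x 0 = 0"
    using assms m1 drift_00 by simp
  have h0: "real d * row I x 0 \<le> 1"
  proof (rule ccontr)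
    assume A: "\<not> ?thesis"
    then have "lam * (1 - real d * row I x 0) < 0" using lam0 by (simp add: mult_pos_neg)
    then have "Rfun lam d I x 0 = 0" using R0 by simp
    then have "lam * (real d * row I x 0) = lam * 1" using e0 by (simp add: algebra_simps)
    then have "real d * row I x 0 = 1" using lam0 by simp
    with A show False by simp
  qed
  then have R0': "Rfun lam d I x 0 = lam - lam * real d * row I x 0"
    using R0 lam0 by (simp add: algebra_simps)
  have G: "Gfun lam d I x k = lam * real d * Tc I x k" if "1 \<le> k" "k < m" for k
    using that
  proof (induction k)
    case 0 then show ?case by simp
  next
    case (Suc k)
    show ?case
    proof (cases "k = 0")
      case True
      then have "drift lam d I x 1 1 = 0" using assms Suc by simp
      then show ?thesis using drift_11 True Suc R0' by (simp add: Tc_Suc Tc_0 algebra_simps)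
    next
      case False
      then have "drift lam d I x (Suc k) (Suc k) = 0" using assms Suc by simp
      moreover have "Gfun lam d I x k = lam * real d * Tc I x k" using Suc False by simp
      ultimately show ?thesis using drift_kk[of "Suc k"] False Suc by (simp add: Tc_Suc algebra_simps)
    qed
  qed
  have S: "real d * Sc I x (m-1) \<le> 1"
  proof (cases "m = 1")
    case True then show ?thesis using h0 by (simp add: Sc_0)
  next
    case False
    then have g: "Gfun lam d I x (m-1) = lam * real d * Tc I x (m-1)" using G m1 by simp
    show ?thesis
    proof (rule ccontr)
      assume A: "\<not> ?thesis"
      then have "Gfun lam d I x (m-1) = 0" using m1 by (simp add: G_shape)
      then have "Tc I x (m-1) = 0" using g lam0 dpos by simp
      then have "Sc I x (m-1) = 0" by (rule Sc_zero[OF sx])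
      with A show False by simp
    qed
  qed
  moreover have "Rfun lam d I x (m-1) = lam - lam * real d * Sc I x (m-1)"
    using S m1 lam0 by (simp add: R_shape algebra_simps)
  ultimately show ?thesis by simp
qed

context assumes mEq: "m = I" and I1: "1 < I"
begin

lemma rI: "rho lam d I x (I - Suc 0) a I = q * x a I"
  using rho_m'[of a] mEq by simp
lemma rI2: "rho lam d I x (I - 2) a (I - Suc 0) = 0"
  using rho_0[of "I - Suc 0"] mEq I1 by simp

lemma drift_colI: assumes "i < m"
  shows "drift lam d I x i m = x (i+1) m - (if i>0 then x i m else 0) - lam * real d * x i m - q * x i m
     + (if i > 0 then q * x (i-1) m else 0)"
  using assms mEq rI rI2 unfolding drift_def by simp

lemma drift_diagI: "drift lam d I x m m = - x m m + Gfun lam d I x (m-1) + q * x (m-1) m"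
proof -
  have "\<not> I \<le> I - Suc 0" "I \<noteq> 0" "I \<noteq> 1" using I1 by auto
  then have "drift lam d I x I I = - x I I + rho lam d I x (I - 2) (I - Suc 0) (I - Suc 0)
     + Gfun lam d I x (I - Suc 0) + rho lam d I x (I - Suc 0) (I - Suc 0) I"
    unfolding drift_def by simp
  then show ?thesis using mEq rI rI2 by simp
qed

end

context assumes mI2: "Suc m \<le> I"
begin

lemma drift_colm: assumes "i < m"
  shows "drift lam d I x i m = x (i+1) m - (if i>0 then x i m else 0) - lam * real d * x i m - q * x i m"
proof -
  have "m \<noteq> I" using mI2 by simp
  moreover have "(if i>0 then rho lam d I x (m-2) (i-1) (m-1) else 0) = 0"
    using m1 by (simp add: rho_0)
  ultimately show ?thesis using assms m1 unfolding drift_def by (simp add: rho_m')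
qed

lemma drift_colm1: assumes "i < Suc m"
  shows "drift lam d I x i (Suc m) = x (i+1) (Suc m) - (if i>0 then x i (Suc m) else 0)
     - lam * real d * x i (Suc m) + (if i > 0 then q * x (i-1) m else 0)"
proof -
  have a: "rho lam d I x (Suc m - 1) i (Suc m) = 0" by (simp add: rho_0')
  have b: "rho lam d I x (Suc m - 2) (i-1) (Suc m - 1) = q * x (i-1) m"
    using m1 rho_m by (simp add: numeral_2_eq_2)
  have c: "(if Suc m = I \<and> i > 0 then rho lam d I x (I-1) (i-1) I else 0) = 0"
  proof (cases "Suc m = I \<and> i > 0")
    case True have "m \<le> I - 1" using mI2 by arith
    then show ?thesis using True rho_0'[of "I-1" "i-1" I] by metis
  qed auto
  show ?thesis using assms m1 a b c unfolding drift_def by simp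
qed

lemma drift_diagm:
  "drift lam d I x m m = - x m m + lam * real d * x m (Suc m) - q * x m m
     + (if m = 1 then lam - Rfun lam d I x 0 else Gfun lam d I x (m-1))"
proof -
  have r: "rho lam d I x (m-1) m m = q * x m m" by (rule rho_m)
  have g: "Gfun lam d I x m = 0" by (simp add: G_0')
  have rw: "row I x m = x m m + x m (Suc m)" by (rule row_shape)
  show ?thesis
  proof (cases "m = 1")
    case True
    then show ?thesis using r g rw unfolding drift_def by simp
  next
    case False
    have r2: "rho lam d I x (m-2) (m-1) (m-1) = 0" using m1 by (simp add: rho_0)
    have "2 \<le> m" "m \<le> I - 1" using False m1 mI2 by auto
    then show ?thesis using r r2 g rw False unfolding drift_def by simp
  qed
qed

lemma drift_diagm1: "drift lam d I x (Suc m) (Suc m) = - x (Suc m) (Suc m) + q * x m m"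
proof -
  have r: "rho lam d I x (m-1) m m = q * x m m" by (rule rho_m)
  have r0: "rho lam d I x m a b = 0" for a b by (simp add: rho_0')
  have g: "Gfun lam d I x m = 0" "Gfun lam d I x (Suc m) = 0" by (simp_all add: G_0')
  have rw: "row I x (Suc m) = x (Suc m) (Suc m)" using row_shape xz2[of "Suc m"] by simp
  show ?thesis
  proof (cases "Suc m = I")
    case True
    have e: "I - 2 = m - 1" "I - 1 = m" using True by auto
    have "drift lam d I x (Suc m) (Suc m) = - x I I + rho lam d I x (I-2) (I-1) (I-1)
          + Gfun lam d I x (I-1) + rho lam d I x (I-1) (I-1) I"
      using True m1 unfolding drift_def by auto
    also have "\<dots> = - x (Suc m) (Suc m) + q * x m m"
      unfolding e using True r r0 g by simp
    finally show ?thesis .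
  next
    case False
    have "2 \<le> Suc m" "Suc m \<le> I - 1" using False m1 mI2 by auto
    then show ?thesis using r r0 g rw False m1 unfolding drift_def by simp
  qed
qed

lemma drift_zero_off: assumes "i < j" "j \<noteq> m" "j \<noteq> Suc m" "j \<le> I"
  shows "drift lam d I x i j = 0"
proof -
  have a: "rho lam d I x (j-1) i j = 0" using assms by (simp add: rho_0)
  have b: "rho lam d I x (j-2) (i-1) (j-1) = 0"
  proof (cases "j - 1 = Suc m")
    case True then show ?thesis by (intro rho_0') auto
  next
    case False then show ?thesis using assms by (intro rho_0) auto
  qed
  have c: "rho lam d I x (I-1) (i-1) I = 0" if "j = I" using assms that by (simp add: rho_0)
  have "x (i+1) j = 0" "x i j = 0" using assms by (simp_all add: xz)
  then show ?thesis using assms a b c unfolding drift_def by auto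
qed

lemma drift_zero_diag: assumes "Suc m < j" "j \<le> I"
  shows "drift lam d I x j j = 0"
proof (cases "j = I")
  case True
  have e: "rho lam d I x (I-2) (I-1) (I-1) = 0" "rho lam d I x (I-1) (I-1) I = 0"
       "Gfun lam d I x (I-1) = 0"
    using assms True by (auto intro!: rho_0' G_0')
  have "drift lam d I x j j = - x I I + rho lam d I x (I-2) (I-1) (I-1)
          + Gfun lam d I x (I-1) + rho lam d I x (I-1) (I-1) I"
    using True assms m1 unfolding drift_def by auto
  then show ?thesis using e xz[of I I] True assms by simp
next
  case False
  have e: "rho lam d I x (j-1) j j = 0" "rho lam d I x (j-2) (j-1) (j-1) = 0"
       "Gfun lam d I x (j-1) = 0" "Gfun lam d I x j = 0"
    using assms by (auto intro!: rho_0' rho_0 G_0')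
  have rw: "row I x j = 0" using row_shape xz2[of j] xz3[of j] assms by simp
  have "2 \<le> j" "j \<le> I - 1" using False assms by auto
  then show ?thesis using e rw xz[of j j] assms unfolding drift_def by simp
qed

end

end
lemma (in shp) drift_m0: assumes m0: "m = 0" and I1: "1 < I" and ij: "i \<le> j" "j \<le> I"
  shows "drift lam d I x i j = (if i=0 \<and> j=0 then lam * real d * x 0 1 - lam
     else if i=0 \<and> j=1 then x 1 1 - lam * real d * x 0 1 else if i=1 \<and> j=1 then lam - x 1 1 else 0)"
proof -
  have r: "rho lam d I x k a b = 0" for k a b using m0 by (simp add: rho_shape)
  have R: "Rfun lam d I x k = 0" for k using m0 by (simp add: R_shape)
  have G: "Gfun lam d I x k = 0" for k using m0 by (simp add: G_shape)
  have z: "x a b = 0" if "2 \<le> b" for a b using shape_eq[of a b] m0 that by auto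
  have z0: "x a 0 = 0" if "0 < a" for a using simplex_zero[OF sx, of a 0] that by simp
  have z1: "x a 1 = 0" if "1 < a" for a using simplex_zero[OF sx, of a 1] that by simp
  have rw: "row I x a = x a 0 + x a 1" for a using row_shape m0 by simp
  show ?thesis
  proof (cases "j \<le> 1")
    case True
    then consider "i = 0" "j = 0" | "i = 0" "j = 1" | "i = 1" "j = 1" using ij by linarith
    then show ?thesis
    proof cases
      case 1 then show ?thesis using R rw unfolding drift_def by (simp add: algebra_simps)
    next
      case 2 then show ?thesis using r I1 z[of 1 1] unfolding drift_def by simp
    next
      case 3 then show ?thesis using r R G rw z0[of 1] unfolding drift_def by simp
    qed
  next
    case False
    have zz: "x a j = 0" for a using False z by simp
    have rj: "row I x j = 0" using rw[of j] z0[of j] z1[of j] False by simp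
    show ?thesis using False zz rj r G z[of "Suc i" j] unfolding drift_def by auto
  qed
qed


locale seqs =
  fixes be al a0 b0 :: real
begin
definition "Af k = al^k * a0"
definition "Bf k = be^k * b0 + a0 * (be^(k-1) - al^(k-1))"
definition "af i = (if i = 0 then a0 else (al - 1) * al^(i-1) * a0)"
definition "bf i = (if i = 0 then b0 else Bf i - Bf (i-1))"

lemma Bf0: "Bf 0 = b0" by (simp add: Bf_def)
lemma Bf_Suc: "Bf (Suc n) = be^(Suc n) * b0 + a0 * (be^n - al^n)" by (simp add: Bf_def)

lemma af_1: "af 1 = (al - 1) * a0" by (simp add: af_def)
lemma af_Suc: "0 < i \<Longrightarrow> af (Suc i) = al * af i"
  by (cases i) (auto simp: af_def)
lemma bf_1: "bf 1 = (be - 1) * b0" by (simp add: bf_def Bf_def algebra_simps)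
lemma bf_SS: "bf (Suc (Suc n)) = be * bf (Suc n) - (al - be) * af n"
  by (cases n) (simp_all add: bf_def Bf_def af_def algebra_simps)

lemma sumA: "(\<Sum>i=0..k. af i) = Af k"
proof (induction k)
  case 0 then show ?case by (simp add: af_def Af_def)
next
  case (Suc k) then show ?case by (simp add: af_def Af_def algebra_simps)
qed

lemma sumB: "(\<Sum>i=0..k. bf i) = Bf k"
proof (induction k)
  case 0 then show ?case by (simp add: bf_def Bf_def)
next
  case (Suc k) then show ?case by (simp add: bf_def)
qed

lemma Af_Suc: "Af (Suc k) = Af k + af (Suc k)" by (simp add: Af_def af_def algebra_simps)

lemma Tid: "(be - 1) * (\<Sum>k=0..n. Af k + Bf k) = Af (n+1) + Bf (n+1) - (a0 + b0) - (al - be) * Af n"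
proof (induction n)
  case 0 then show ?case by (simp add: Af_def Bf_def algebra_simps)
next
  case (Suc n)
  have "(be - 1) * (\<Sum>k=0..Suc n. Af k + Bf k) = (be - 1) * (\<Sum>k=0..n. Af k + Bf k) + (be - 1) * (Af (Suc n) + Bf (Suc n))"
    by (simp add: algebra_simps)
  also have "\<dots> = Af (Suc (Suc n)) + Bf (Suc (Suc n)) - (a0 + b0) - (al - be) * Af (Suc n)"
    unfolding Suc by (cases n) (simp_all add: Af_def Bf_def algebra_simps)
  finally show ?case by simp
qed

end


locale fpt =
  fixes lam :: real and d I :: nat and y :: "nat \<Rightarrow> nat \<Rightarrow> real"
  assumes lam0: "0 < lam" and lam1: "lam < 1" and d2: "2 \<le> d" and I1: "1 < I"
    and fp: "fixed_point lam d I y"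
begin

lemma sy: "y \<in> simplexS I" using fp by (simp add: fixed_point_def)
lemma dz: "i \<le> j \<Longrightarrow> j \<le> I \<Longrightarrow> drift lam d I y i j = 0" using fp by (simp add: fixed_point_def)

lemma Dpos: "0 < lam * real d" using lam0 d2 by simp

definition "m = (LEAST j. 0 < col y j)"

lemma ex_col: "\<exists>j\<le>I. 0 < col y j"
proof (rule ccontr)
  assume "\<not> ?thesis"
  then have "\<forall>j\<in>{0..I}. col y j = 0" using col_nonneg[OF sy] by (meson atLeastAtMost_iff antisym not_le)
  then have "(\<Sum>j=0..I. col y j) = 0" by simp
  with total_col[OF sy] show False by simp
qed

lemma cm: "0 < col y m" unfolding m_def using ex_col by (meson LeastI_ex)
lemma mI: "m \<le> I" unfolding m_def using ex_col by (meson Least_le order.trans)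
lemma below: "j < m \<Longrightarrow> col y j = 0"
  unfolding m_def using not_less_Least col_nonneg[OF sy] by (metis le_less)
lemma below_y: "j < m \<Longrightarrow> y i j = 0" using below col_zero_iff[OF sy] by blast

lemma CS_pos: "m \<le> k \<Longrightarrow> CS y k \<noteq> 0" using CS_ge[OF sy] cm by (metis less_le_trans less_irrefl)
lemma R0: "m \<le> k \<Longrightarrow> Rfun lam d I y k = 0" by (simp add: Rfun_CS CS_pos)
lemma G0: "m \<le> k \<Longrightarrow> Gfun lam d I y k = 0" by (simp add: Gfun_CS CS_pos)
lemma rho0: "m \<le> k \<Longrightarrow> rho lam d I y k a b = 0" by (simp add: rho_def R0)

lemma col_zero_step:
  assumes n: "Suc m < n" "n \<le> I" and above: "\<And>k i. n < k \<Longrightarrow> y i k = 0"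
  shows "y i n = 0"
proof -
  have diag: "y n n = 0"
  proof (cases "n = I")
    case True
    have "\<not> I \<le> I - Suc 0" "I \<noteq> 0" "I \<noteq> 1" using I1 by auto
    then have "drift lam d I y I I = - y I I + rho lam d I y (I - 2) (I - Suc 0) (I - Suc 0)
       + Gfun lam d I y (I - Suc 0) + rho lam d I y (I - Suc 0) (I - Suc 0) I"
      unfolding drift_def by simp
    moreover have "rho lam d I y (I - 2) (I - Suc 0) (I - Suc 0) = 0"
       "Gfun lam d I y (I - Suc 0) = 0" "rho lam d I y (I - Suc 0) (I - Suc 0) I = 0"
      using n True by (auto intro!: rho0 G0)
    ultimately show ?thesis using dz[of I I] True by simp
  next
    case False
    have rw: "row I y n = y n n"
    proof -
      have "row I y n = (\<Sum>j\<in>{n}. y n j)" unfolding row_def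
        using above n by (intro sum.mono_neutral_right) auto
      then show ?thesis by simp
    qed
    have "2 \<le> n" "n \<le> I - 1" "n \<noteq> 1" using n False by auto
    then have "drift lam d I y n n = - y n n + lam * real d * (row I y n - y n n)
      - rho lam d I y (n-1) n n + rho lam d I y (n-2) (n-1) (n-1) + Gfun lam d I y (n-1) - Gfun lam d I y n"
      unfolding drift_def by simp
    moreover have "rho lam d I y (n-1) n n = 0" "rho lam d I y (n-2) (n-1) (n-1) = 0"
      "Gfun lam d I y (n-1) = 0" "Gfun lam d I y n = 0" using n by (auto intro!: rho0 G0)
    ultimately show ?thesis using dz[of n n] n rw by simp
  qed
  show ?thesis
  proof (cases "i \<le> n")
    case True
    show ?thesis using True
    proof (induction rule: inc_induct)
      case base then show ?case by (rule diag)
    next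
      case (step k)
      have "drift lam d I y k n = y (k+1) n - (if k > 0 then y k n else 0) - lam * real d * y k n"
        using step n by (simp add: drift_def rho0)
      then have "((if k > 0 then 1 else 0) + lam * real d) * y k n = 0"
        using dz[of k n] step n by (simp add: algebra_simps)
      moreover have "(if k > 0 then 1 else 0) + lam * real d > 0" using Dpos by simp
      ultimately show ?case by simp
    qed
  next
    case False then show ?thesis using simplex_zero[OF sy, of i n] by simp
  qed
qed

lemma above_zero: "Suc m < n \<Longrightarrow> y i n = 0"
proof -
  have "\<forall>k i. n \<le> k \<longrightarrow> y i k = 0" if "Suc m < n" for n
  proof (cases "n \<le> Suc I")
    case True
    show ?thesis using True that
    proof (induction rule: inc_induct)
      case base then show ?case using simplex_zero[OF sy] by auto
    next
      case (step k)
      have "\<And>ka i. k < ka \<Longrightarrow> y i ka = 0" using step by auto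
      then have "y i k = 0" for i
        using col_zero_step[of k i] step by simp
      moreover have "\<forall>ka i. Suc k \<le> ka \<longrightarrow> y i ka = 0" using step by auto
      ultimately show ?case by (metis le_eq_less_or_eq Suc_le_eq)
    qed
  next
    case False then show ?thesis using simplex_zero[OF sy] by auto
  qed
  then show "Suc m < n \<Longrightarrow> y i n = 0" by blast
qed

lemma shape_y: "shape m y"
  unfolding shape_def
proof (intro allI impI)
  fix i j assume "y i j \<noteq> 0"
  then have "\<not> j < m" "\<not> Suc m < j" "i \<le> j" using below_y above_zero simplex_zero[OF sy, of i j] by auto
  then show "(j = m \<and> i \<le> m) \<or> (j = Suc m \<and> i \<le> Suc m)" by auto
qed


end



context seqs begin

lemma af_0: "af 0 = a0" by (simp add: af_def)
lemma bf_0: "bf 0 = b0" by (simp add: bf_def)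
lemma af_Sucn: "af (Suc n) = (al - 1) * al^n * a0" by (simp add: af_def)
lemma bf_Sucn: "bf (Suc n) = Bf (Suc n) - Bf n" by (simp add: bf_def)
lemma Af_eq: "Af n = al^n * a0" by (simp add: Af_def)

lemma tot_cf: "Af (Suc n) + Bf (Suc (Suc n)) = be^(Suc (Suc n))*b0 + be^(Suc n)*a0"
  by (simp add: Af_def Bf_def algebra_simps)

lemma Dg_cf: "Af n + Bf (Suc n) = be^(Suc n)*b0 + be^n*a0"
  by (simp add: Af_def Bf_def algebra_simps)

lemma bf_SSc: "bf (Suc (Suc k)) = (be - 1) * be^(Suc k) * b0 + a0 * ((be - 1) * be^k - (al - 1) * al^k)"
  by (simp add: bf_def Bf_def algebra_simps)

lemma C_cf: assumes E2: "be^(Suc (Suc n))*b0 + be^(Suc n)*a0 = 1"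
  shows "be * bf (Suc (Suc n)) = (be - 1) - a0 * be * al^n * (al - 1)"
proof -
  have "be * bf (Suc (Suc n)) = be * (be^(Suc (Suc n))*b0 + be^(Suc n)*a0) - (be^(Suc (Suc n))*b0 + be^(Suc n)*a0)
          - a0 * be * al^n * (al - 1)"
    by (simp add: bf_SSc algebra_simps)
  then show ?thesis using E2 by simp
qed

lemma af_nonneg: "1 \<le> al \<Longrightarrow> 0 \<le> a0 \<Longrightarrow> 0 \<le> af i"
  by (simp add: af_def)

lemma bf_mono_aux: assumes "k \<le> n" "1 \<le> be" "be \<le> al" "0 \<le> a0"
  shows "be^k * bf (Suc (Suc n)) \<le> be^n * bf (Suc (Suc k))"
proof -
  obtain p where n: "n = k + p" using assms(1) le_Suc_ex by blast
  have pp: "be^p \<le> al^p" using assms by (intro power_mono) auto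
  have "be^n * bf (Suc (Suc k)) - be^k * bf (Suc (Suc n)) = a0 * (al - 1) * (be^k * al^k) * (al^p - be^p)"
    unfolding bf_SSc n by (simp add: algebra_simps power_add)
  also have "\<dots> \<ge> 0" using pp assms by (intro mult_nonneg_nonneg) auto
  finally show ?thesis by simp
qed

end


definition a0f :: "real \<Rightarrow> nat \<Rightarrow> nat \<Rightarrow> real" where
  "a0f lam d J = ((1 + lam * real d) * (1 - lam) - 1 / (1 + lam * real d)^J) / (lam * real d)"

definition Xf :: "real \<Rightarrow> nat \<Rightarrow> nat \<Rightarrow> real \<Rightarrow> nat \<Rightarrow> nat \<Rightarrow> real" where
  "Xf lam d J q = (\<lambda>i j. if j = J \<and> i \<le> J then seqs.af (1 + lam * real d + q) (a0f lam d J) i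
     else if j = Suc J \<and> i \<le> Suc J then
       seqs.bf (1 + lam * real d) (1 + lam * real d + q) (a0f lam d J) (1 - lam - a0f lam d J) i
     else 0)"

definition E3 :: "real \<Rightarrow> nat \<Rightarrow> nat \<Rightarrow> real \<Rightarrow> bool" where
  "E3 lam d J q \<longleftrightarrow> (lam * real d + q) * (1 + lam * real d + q)^(J - 1) * a0f lam d J
      * (1 + lam * real d) * (1 + q) = lam * real d"

context fpt begin

lemma U1: assumes m1: "1 \<le> m" and mI2: "Suc m \<le> I"
  shows "(1 + lam * real d)^m * (1 - lam) \<le> 1 \<and> 1 < (1 + lam * real d)^(Suc m) * (1 - lam)
     \<and> (\<exists>q \<ge> 0. E3 lam d m q \<and> y = Xf lam d m q)"
proof -
  interpret S: shp2 I m y lam d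
    by unfold_locales (use sy shape_y cm mI m1 lam0 d2 in auto)
  define D where "D = lam * real d"
  define be where "be = 1 + D"
  define q where "q = S.q"
  define al where "al = 1 + lam * real d + q"
  define a0 where "a0 = y 0 m"
  define b0 where "b0 = y 0 (Suc m)"
  interpret Q: seqs be al a0 b0 .
  have Dpos: "0 < D" unfolding D_def using Dpos .
  have be1: "be - 1 = D" "al - be = q" "al - 1 = D + q" unfolding be_def al_def D_def by auto
  have Rm: "Rfun lam d I y (m-1) = q * col y m" unfolding q_def S.q_def using cm by simp
  have q0: "0 \<le> q" unfolding q_def S.q_def using cm m1 by (simp add: S.R_shape)
  have ya: "y i m = Q.af i" if "i \<le> m" for i
    using that
  proof (induction i)
    case 0 then show ?case using Q.af_0 a0_def by simp
  next
    case (Suc i)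
    have "drift lam d I y i m = 0" using dz Suc mI by simp
    then have e: "y (Suc i) m = (if i > 0 then y i m else 0) + D * y i m + q * y i m"
      using S.drift_colm[OF mI2, of i] Suc unfolding D_def q_def by simp
    show ?case
    proof (cases "i = 0")
      case True then show ?thesis using e Suc Q.af_1 be1 by (simp add: a0_def algebra_simps)
    next
      case False then show ?thesis using e Suc Q.af_Suc[of i] be1
        by (simp add: algebra_simps al_def D_def)
    qed
  qed
  have yb: "y i (Suc m) = Q.bf i \<and> y (Suc i) (Suc m) = Q.bf (Suc i)" if "Suc i \<le> Suc m" for i
    using that
  proof (induction i)
    case 0
    have "drift lam d I y 0 (Suc m) = 0" using dz mI2 by simp
    then have "y 1 (Suc m) = D * b0" using S.drift_colm1[OF mI2, of 0] unfolding D_def b0_def by simp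
    then show ?case using Q.bf_1 be1 Q.bf_0 b0_def by simp
  next
    case (Suc i)
    have "drift lam d I y (Suc i) (Suc m) = 0" using dz Suc mI2 by simp
    then have "y (Suc (Suc i)) (Suc m) = y (Suc i) (Suc m) + D * y (Suc i) (Suc m) - q * y i m"
      using S.drift_colm1[OF mI2, of "Suc i"] Suc unfolding D_def q_def by simp
    then show ?case using Suc ya[of i] Q.bf_SS[of i] be1 by (simp add: algebra_simps be_def)
  qed
  have yb': "y i (Suc m) = Q.bf i" if "i \<le> Suc m" for i
    using yb[of i] yb[of "i - 1"] that by (cases i) auto
  have colm: "col y m = Q.Af m" unfolding col_def Q.sumA[symmetric] using ya by simp
  have colm1: "col y (Suc m) = Q.Bf (Suc m)" unfolding col_def Q.sumB[symmetric] using yb' by simp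
  have tot: "col y m + col y (Suc m) = 1"
  proof -
    have "1 = (\<Sum>j=0..I. col y j)" using total_col[OF sy] by simp
    also have "\<dots> = (\<Sum>j\<in>{m, Suc m}. col y j)"
      using mI2 S.col_other by (intro sum.mono_neutral_right) auto
    finally show ?thesis by simp
  qed
  have C: "Q.bf (Suc m) = q * Q.af m"
  proof -
    have "drift lam d I y (Suc m) (Suc m) = 0" using dz mI2 by simp
    then show ?thesis using S.drift_diagm1[OF mI2] ya[of m] yb'[of "Suc m"] unfolding q_def by simp
  qed
  have GC: "real d * Sc I y (m-1) \<le> 1 \<and> Rfun lam d I y (m-1) = lam - lam * real d * Sc I y (m-1)"
    using S.Gchain dz mI by simp
  have Tck: "Tc I y k = Q.Af k + Q.Bf k" if "k \<le> m" for k
  proof -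
    have "Tc I y k = (\<Sum>i=0..k. Q.af i + Q.bf i)" unfolding Tc_def S.row_shape
      using that ya yb' by (intro sum.cong) auto
    then show ?thesis by (simp add: sum.distrib Q.sumA Q.sumB)
  qed
  obtain n where mn: "m = Suc n" using m1 by (cases m) auto
  have Sc_eq: "Sc I y n = (\<Sum>k=0..n. Q.Af k + Q.Bf k)" unfolding Sc_Tc using Tck mn by simp
  have Tid: "D * Sc I y n = Q.Af m + Q.Bf m - (a0 + b0) - q * Q.Af n"
    using Q.Tid[of n] be1 mn Sc_eq by simp
  have E1: "a0 + b0 = 1 - lam"
  proof -
    have "q * Q.Af m = lam - D * Sc I y n" using GC Rm colm mn unfolding D_def by simp
    moreover have "Q.Bf m = Q.Bf (Suc m) - Q.bf (Suc m)" by (simp add: Q.bf_Sucn)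
    moreover have "Q.Af m = Q.Af n + Q.af m" using Q.Af_Suc mn by simp
    ultimately show ?thesis using Tid tot colm colm1 C by (simp add: algebra_simps)
  qed
  have E2: "be^(Suc (Suc n))*b0 + be^(Suc n)*a0 = 1" using Q.tot_cf[of n] tot colm colm1 mn by simp
  have E3': "(al - 1) * al^n * a0 * be * (1 + q) = D"
  proof -
    have "be * Q.bf (Suc (Suc n)) = D - a0 * be * al^n * (al - 1)" using Q.C_cf[OF E2] be1 by simp
    moreover have "Q.bf (Suc (Suc n)) = q * ((al - 1) * al^n * a0)" using C mn by (simp add: Q.af_Sucn)
    ultimately show ?thesis by (simp add: algebra_simps)
  qed
  have al0: "0 < al" unfolding al_def using q0 Dpos unfolding D_def by linarith
  have a0pos: "0 < a0"
  proof -
    have "0 < al^m * a0" using cm colm by (simp add: Q.Af_eq)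
    then show ?thesis using al0 by (simp add: zero_less_mult_iff)
  qed
  have b0nn: "0 \<le> b0" unfolding b0_def by (rule simplex_nonneg[OF sy])
  have bepos: "0 < be" "1 \<le> be" unfolding be_def using Dpos by auto
  have key: "D * be^m * a0 = be^(Suc m) * (1 - lam) - 1"
  proof -
    have b0e: "b0 = 1 - lam - a0" using E1 by simp
    have "be^(Suc (Suc n)) * (1 - lam) - 1 = be^(Suc (Suc n)) * a0 - be^(Suc n) * a0"
      using E2 unfolding b0e by (simp add: algebra_simps)
    also have "\<dots> = (be - 1) * be^(Suc n) * a0" by (simp add: algebra_simps)
    finally show ?thesis using be1 mn by simp
  qed
  have a0eq: "a0 = a0f lam d m"
  proof -
    have P: "be^m > 0" using bepos by simp
    have "D * a0 = (D * be^m * a0) / be^m" using P bepos by simp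
    also have "\<dots> = (be^(Suc m) * (1 - lam) - 1) / be^m" using key by simp
    also have "\<dots> = be * (1 - lam) - 1 / be^m" using P
      by (simp add: diff_divide_distrib)
    finally have "a0 = (be * (1 - lam) - 1 / be^m) / D" using Dpos by (simp add: field_simps)
    then show ?thesis unfolding a0f_def be_def D_def by simp
  qed
  have ineq1: "1 < be^(Suc m) * (1 - lam)"
  proof -
    have "0 < D * be^m * a0" using Dpos bepos a0pos by simp
    then show ?thesis using key by simp
  qed
  have ineq2: "be^m * (1 - lam) \<le> 1"
  proof -
    have "be^m * b0 \<le> be^(Suc m) * b0" using b0nn bepos by (intro mult_right_mono) auto
    have "be^m * (1 - lam) = be^m * (a0 + b0)" using E1 by simp
    also have "\<dots> = be^m * a0 + be^m * b0" by (simp add: algebra_simps)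
    also have "\<dots> \<le> be^m * a0 + be^(Suc m) * b0" using \<open>be^m * b0 \<le> be^(Suc m) * b0\<close> by simp
    also have "\<dots> = 1" using E2 mn by (simp add: algebra_simps)
    finally show ?thesis .
  qed
  have yX: "y = Xf lam d m q"
  proof (intro ext)
    fix i j
    have b0eq: "b0 = 1 - lam - a0f lam d m" using E1 a0eq by simp
    show "y i j = Xf lam d m q i j"
    proof (cases "j = m \<or> j = Suc m")
      case True
      then show ?thesis
        using ya yb' simplex_zero[OF sy, of i m] simplex_zero[OF sy, of i "Suc m"]
        unfolding Xf_def al_def be_def D_def a0eq b0eq by auto
    next
      case False then show ?thesis using S.xz unfolding Xf_def by auto
    qed
  qed
  have "E3 lam d m q" unfolding E3_def using E3' mn a0eq unfolding al_def be_def D_def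
    by (simp add: algebra_simps)
  then show ?thesis using ineq1 ineq2 yX q0 unfolding be_def D_def by auto
qed

end


context fpt begin

lemma U0: assumes m0: "m = 0"
  shows "1 < (1 + lam * real d) * (1 - lam) \<and> y = Xf lam d 0 0"
proof -
  interpret S: shp I 0 y using sy shape_y cm mI m0 by unfold_locales auto
  define D where "D = lam * real d"
  have Dp: "0 < D" unfolding D_def by (rule Dpos)
  have e00: "D * y 0 1 = lam" using dz[of 0 0] S.drift_m0[of 0 0 lam d] I1 unfolding D_def by simp
  have e01: "y 1 1 = D * y 0 1" using dz[of 0 1] S.drift_m0[of 0 1 lam d] I1 unfolding D_def by simp
  have tot: "col y 0 + col y 1 = 1"
  proof -
    have "1 = (\<Sum>j=0..I. col y j)" using total_col[OF sy] by simp
    also have "\<dots> = (\<Sum>j\<in>{0, 1}. col y j)"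
      using I1 S.col_other by (intro sum.mono_neutral_right) auto
    finally show ?thesis by simp
  qed
  have c0: "col y 0 = y 0 0" "col y 1 = y 0 1 + y 1 1" by (simp_all add: col_def)
  have y01: "y 0 1 = lam / D" using e00 Dp by (simp add: field_simps)
  have y00: "y 0 0 = 1 - lam - lam / D" using tot c0 e01 e00 y01 by simp
  have a0: "a0f lam d 0 = 1 - lam - lam / D"
    unfolding a0f_def D_def[symmetric] using Dp by (simp add: field_simps)
  have pos: "0 < y 0 0" using cm m0 c0 by simp
  have ineq: "1 < (1 + D) * (1 - lam)"
  proof -
    have "0 < D * y 0 0" using pos Dp by simp
    also have "D * y 0 0 = D - D * lam - lam" using y00 Dp by (simp add: field_simps)
    finally show ?thesis by (simp add: algebra_simps)
  qed
  have yX: "y = Xf lam d 0 0"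
  proof (intro ext)
    fix i j
    show "y i j = Xf lam d 0 0 i j"
    proof (cases "j = 0 \<or> j = 1")
      case True
      then consider "j = 0" "i = 0" | "j = 0" "i > 0" | "j = 1" "i = 0" | "j = 1" "i = 1" | "j = 1" "i > 1"
        by linarith
      then show ?thesis
      proof cases
        case 1 then show ?thesis using y00 a0 unfolding Xf_def by (simp add: seqs.af_0)
      next
        case 2 then show ?thesis using simplex_zero[OF sy, of i 0] unfolding Xf_def by simp
      next
        case 3 then show ?thesis using y01 a0 unfolding Xf_def by (simp add: seqs.bf_0 field_simps)
      next
        case 4
        have "Xf lam d 0 0 1 1 = D * (1 - lam - a0f lam d 0)"
          by (simp add: Xf_def seqs.bf_Sucn seqs.Bf_def D_def algebra_simps)
        also have "\<dots> = lam" using a0 Dp by simp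
        finally show ?thesis using 4 e01 e00 by simp
      next
        case 5 then show ?thesis using simplex_zero[OF sy, of i 1] unfolding Xf_def by simp
      qed
    next
      case False then show ?thesis using S.shape_eq[of i j] m0 unfolding Xf_def by auto
    qed
  qed
  show ?thesis using ineq yX unfolding D_def by simp
qed

lemma UI: assumes mEq: "m = I"
  shows "(1 + lam * real d)^I * (1 - lam) \<le> 1"
proof -
  interpret S: shp2 I m y lam d
    by unfold_locales (use sy shape_y cm mI mEq I1 lam0 d2 in auto)
  define D where "D = lam * real d"
  define q where "q = S.q"
  define T where "T = Tc I y"
  have Dp: "0 < D" unfolding D_def by (rule Dpos)
  have Rm: "Rfun lam d I y (I-1) = q" 
  proof -
    have "col y I = 1"
    proof -
      have "1 = (\<Sum>j=0..I. col y j)" using total_col[OF sy] by simp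
      also have "\<dots> = (\<Sum>j\<in>{I}. col y j)"
        using mEq S.col_other by (intro sum.mono_neutral_right) auto
      finally show ?thesis by simp
    qed
    then show ?thesis unfolding q_def S.q_def using mEq by simp
  qed
  have q0: "0 \<le> q" unfolding q_def S.q_def using cm mEq I1 by (simp add: S.R_shape)
  have row: "row I y i = y i I" for i using S.row_shape mEq simplex_zero[OF sy, of i "Suc I"] by simp
  have T0: "T 0 = y 0 I" unfolding T_def by (simp add: Tc_0 row)
  have TS: "T (Suc k) = T k + y (Suc k) I" for k unfolding T_def by (simp add: Tc_Suc row)
  have TI: "T I = 1"
  proof -
    have "T I = col y I" unfolding T_def Tc_def col_def row by simp
    also have "\<dots> = (\<Sum>j\<in>{I}. col y j)" by simp
    also have "\<dots> = (\<Sum>j=0..I. col y j)"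
      using mEq S.col_other by (intro sum.mono_neutral_right[symmetric]) auto
    also have "\<dots> = 1" using total_col[OF sy] by simp
    finally show ?thesis .
  qed
  have rec: "y (Suc k) I = D * T k + q * y k I" if "Suc k \<le> I" for k
    using that
  proof (induction k)
    case 0
    have "drift lam d I y 0 I = 0" using dz I1 by simp
    then show ?case using S.drift_colI[OF mEq I1, of 0] mEq I1 T0 unfolding D_def q_def by simp
  next
    case (Suc k)
    have "drift lam d I y (Suc k) I = 0" using dz Suc by simp
    then have "y (Suc (Suc k)) I = y (Suc k) I + D * y (Suc k) I + q * y (Suc k) I - q * y k I"
      using S.drift_colI[OF mEq I1, of "Suc k"] mEq Suc unfolding D_def q_def by simp
    then show ?case using Suc TS[of k] by (simp add: algebra_simps)
  qed
  have Tge: "(1 + D)^k * T 0 \<le> T k" if "k \<le> I" for k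
    using that
  proof (induction k)
    case 0 then show ?case by simp
  next
    case (Suc k)
    have "0 \<le> q * y k I" using q0 simplex_nonneg[OF sy] by simp
    then have "(1 + D) * T k \<le> T (Suc k)" using TS[of k] rec[of k] Suc by (simp add: algebra_simps)
    moreover have "(1 + D) * ((1 + D)^k * T 0) \<le> (1 + D) * T k" using Suc Dp by simp
    ultimately show ?case by simp
  qed
  have Sid: "D * Sc I y k = T (Suc k) - T 0 - q * T k" if "Suc k \<le> I" for k
    using that
  proof (induction k)
    case 0 then show ?case using TS[of 0] rec[of 0] T0 by (simp add: Sc_0 row algebra_simps)
  next
    case (Suc k)
    have "Sc I y (Suc k) = Sc I y k + T (Suc k)" unfolding Sc_Tc T_def by simp
    then show ?case using Suc TS[of k] TS[of "Suc k"] rec[of "Suc k"] by (simp add: algebra_simps)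
  qed
  obtain n where In: "I = Suc n" using I1 by (cases I) auto
  have GC: "real d * Sc I y (m-1) \<le> 1 \<and> Rfun lam d I y (m-1) = lam - lam * real d * Sc I y (m-1)"
    using S.Gchain dz mEq by simp
  have "q = lam - D * Sc I y n" using GC Rm mEq In unfolding D_def by simp
  then have "q = lam - (1 - T 0 - q * T n)" using Sid[of n] In TI by simp
  then have T0e: "T 0 = 1 - lam + q * (1 - T n)" by (simp add: algebra_simps)
  have "T n \<le> T I" unfolding T_def using In by (intro Tc_mono[OF sy]) simp
  then have "0 \<le> q * (1 - T n)" using q0 TI by simp
  then have "1 - lam \<le> T 0" using T0e by simp
  then have "(1 + D)^I * (1 - lam) \<le> (1 + D)^I * T 0" using Dp by (intro mult_left_mono) auto
  also have "\<dots> \<le> 1" using Tge[of I] TI by simp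
  finally show ?thesis unfolding D_def .
qed

end


lemma total_col': assumes "\<And>i j. \<not> (i \<le> j \<and> j \<le> I) \<Longrightarrow> x i j = 0"
  shows "(\<Sum>i=0..I. \<Sum>j=i..I. x i j) = (\<Sum>j=0..I. col x j)"
proof -
  have "(\<Sum>i=0..I. \<Sum>j=i..I. x i j) = (\<Sum>i=0..I. \<Sum>j=0..I. x i j)"
  proof (rule sum.cong[OF refl])
    fix i assume "i \<in> {0..I}"
    show "(\<Sum>j=i..I. x i j) = (\<Sum>j=0..I. x i j)"
      by (rule sum.mono_neutral_left) (auto simp: assms)
  qed
  also have "\<dots> = (\<Sum>j=0..I. \<Sum>i=0..I. x i j)" by (rule sum.swap)
  also have "\<dots> = (\<Sum>j=0..I. col x j)" unfolding col_def
  proof (rule sum.cong[OF refl])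
    fix j assume "j \<in> {0..I}"
    then show "(\<Sum>i=0..I. x i j) = (\<Sum>i=0..j. x i j)"
      by (intro sum.mono_neutral_right) (auto simp: assms)
  qed
  finally show ?thesis .
qed

lemma exist1:
  fixes lam :: real and d I J :: nat and q :: real
  assumes lam0: "0 < lam" and lam1: "lam < 1" and d2: "2 \<le> d" and I1: "1 < I"
    and J1: "1 \<le> J" and JI: "Suc J \<le> I"
    and in1: "(1 + lam * real d)^J * (1 - lam) \<le> 1" and in2: "1 < (1 + lam * real d)^(Suc J) * (1 - lam)"
    and q0: "0 \<le> q" and e3: "E3 lam d J q"
  shows "fixed_point lam d I (Xf lam d J q)"
    and "col (Xf lam d J q) J + col (Xf lam d J q) (Suc J) = 1"
proof -
  define x where "x = Xf lam d J q"
  define D where "D = lam * real d"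
  define be where "be = 1 + D"
  define al where "al = 1 + lam * real d + q"
  define a0 where "a0 = a0f lam d J"
  define b0 where "b0 = 1 - lam - a0"
  interpret Q: seqs be al a0 b0 .
  have Dp: "0 < D" unfolding D_def using lam0 d2 by simp
  have be1: "be - 1 = D" "al - be = q" "al - 1 = D + q" "1 \<le> be" "0 < be" "be \<le> al"
    unfolding be_def al_def D_def using Dp q0 unfolding D_def by auto
  have xd: "x i j = (if j = J \<and> i \<le> J then Q.af i else if j = Suc J \<and> i \<le> Suc J then Q.bf i else 0)"
    for i j unfolding x_def Xf_def al_def be_def D_def a0_def b0_def by simp
  obtain n where Jn: "J = Suc n" using J1 by (cases J) auto
  have P: "0 < be^J" using be1 by simp
  have key: "D * be^J * a0 = be^(Suc J) * (1 - lam) - 1"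
  proof -
    have "D * a0 = be * (1 - lam) - 1 / be^J" unfolding a0_def a0f_def D_def be_def using Dp d2
      unfolding D_def by simp
    then have "D * a0 * be^J = (be * (1 - lam) - 1 / be^J) * be^J" by simp
    also have "\<dots> = be * (1 - lam) * be^J - 1" using P be1 by (simp add: left_diff_distrib)
    finally have "D * a0 * be^J = be * (1 - lam) * be^J - 1" .
    then show ?thesis by (simp add: algebra_simps)
  qed
  have a0pos: "0 < a0"
  proof -
    have "0 < D * be^J * a0" using key in2 unfolding be_def D_def by simp
    moreover have "0 < D * be^J" using Dp P by simp
    ultimately show ?thesis by (simp add: zero_less_mult_iff)
  qed
  have b0nn: "0 \<le> b0"
  proof -
    have "D * be^J * a0 \<le> D * be^J * (1 - lam)"
    proof -
      have "be^(Suc J) * (1 - lam) - 1 \<le> be^(Suc J) * (1 - lam) - be^J * (1 - lam)"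
        using in1 unfolding be_def D_def by simp
      also have "\<dots> = D * be^J * (1 - lam)" using be1 by (simp add: algebra_simps)
      finally show ?thesis using key by simp
    qed
    then have "a0 \<le> 1 - lam" using Dp P by simp
    then show ?thesis unfolding b0_def by simp
  qed
  have E2: "be^(Suc (Suc n))*b0 + be^(Suc n)*a0 = 1"
  proof -
    have "be^(Suc J)*b0 + be^J*a0 = be^(Suc J)*(1 - lam) - (be - 1) * be^J * a0"
      unfolding b0_def by (simp add: algebra_simps)
    then show ?thesis using key be1 Jn by simp
  qed
  have E3': "(al - 1) * al^n * a0 * be * (1 + q) = D"
    using e3 Jn unfolding E3_def al_def a0_def be_def D_def by (simp add: algebra_simps)
  have C: "Q.bf (Suc J) = q * Q.af J"
  proof -
    have "be * Q.bf (Suc (Suc n)) = D - a0 * be * al^n * (al - 1)" using Q.C_cf[OF E2] be1 by simp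
    also have "\<dots> = be * (q * ((al - 1) * al^n * a0))" using E3' by (simp add: algebra_simps)
    finally show ?thesis using be1 Jn by (simp add: Q.af_Sucn)
  qed
  have Tot: "Q.Af J + Q.Bf (Suc J) = 1" using Q.tot_cf[of n] E2 Jn by simp
  have Dg: "(1 + q) * Q.af J = D * (Q.Af n + Q.Bf J)"
  proof -
    have "be * ((1 + q) * Q.af J) = D" using E3' Jn by (simp add: Q.af_Sucn algebra_simps)
    moreover have "be * (Q.Af n + Q.Bf (Suc n)) = 1" using Q.Dg_cf[of n] E2 by (simp add: algebra_simps)
    then have "be * (D * (Q.Af n + Q.Bf J)) = D" using Jn by (metis mult.left_commute mult.right_neutral)
    ultimately show ?thesis using be1 by (metis mult_cancel_left less_irrefl)
  qed
  have afnn: "0 \<le> Q.af i" for i using Q.af_nonneg be1 a0pos by simp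
  have bfC: "0 \<le> Q.bf (Suc J)" using C afnn q0 by simp
  have bfnn: "0 \<le> Q.bf i" if "i \<le> Suc J" for i
  proof (cases i)
    case 0 then show ?thesis using b0nn by (simp add: Q.bf_0)
  next
    case (Suc i')
    show ?thesis
    proof (cases i')
      case 0 then show ?thesis using Suc b0nn Q.bf_1 be1 by simp
    next
      case (Suc k)
      have "k \<le> n" using that Jn \<open>i = Suc i'\<close> Suc by simp
      then have "be^k * Q.bf (Suc (Suc n)) \<le> be^n * Q.bf (Suc (Suc k))"
        using Q.bf_mono_aux be1 a0pos by simp
      moreover have "0 \<le> be^k * Q.bf (Suc (Suc n))" using bfC Jn be1 by simp
      ultimately have "0 \<le> be^n * Q.bf (Suc (Suc k))" by linarith
      moreover have "0 < be^n" using be1 by simp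
      ultimately have "0 \<le> Q.bf (Suc (Suc k))" by (simp add: zero_le_mult_iff)
      then show ?thesis using \<open>i = Suc i'\<close> Suc by simp
    qed
  qed
  have xnn: "0 \<le> x i j" for i j using afnn bfnn by (simp add: xd)
  have xout: "x i j = 0" if "\<not> (i \<le> j \<and> j \<le> I)" for i j using that JI by (auto simp: xd)
  have colJ: "col x J = Q.Af J" unfolding col_def Q.sumA[symmetric] by (simp add: xd)
  have colJ1: "col x (Suc J) = Q.Bf (Suc J)" unfolding col_def Q.sumB[symmetric] by (simp add: xd)
  have colo: "col x j = 0" if "j \<noteq> J" "j \<noteq> Suc J" for j using that unfolding col_def by (simp add: xd)
  have sx: "x \<in> simplexS I"
  proof -
    have "(\<Sum>i=0..I. \<Sum>j=i..I. x i j) = (\<Sum>j=0..I. col x j)" by (rule total_col') (rule xout)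
    also have "\<dots> = (\<Sum>j\<in>{J, Suc J}. col x j)"
      using JI colo by (intro sum.mono_neutral_right) auto
    also have "\<dots> = 1" using colJ colJ1 Tot by simp
    finally show ?thesis unfolding simplexS_def using xnn xout by auto
  qed
  have al0: "0 < al" using be1 by simp
  have cpos: "0 < col x J" using colJ a0pos al0 by (simp add: Q.Af_eq)
  have shx: "shape J x" unfolding shape_def by (auto simp: xd split: if_splits)
  interpret S: shp2 I J x lam d
    by unfold_locales (use sx shx cpos JI J1 lam0 d2 in auto)
  have row: "row I x i = Q.af i + Q.bf i" if "i \<le> J" for i using S.row_shape that by (simp add: xd)
  have Tck: "Tc I x k = Q.Af k + Q.Bf k" if "k \<le> J" for k
  proof -
    have "Tc I x k = (\<Sum>i=0..k. Q.af i + Q.bf i)" unfolding Tc_def using that row by simp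
    then show ?thesis by (simp add: sum.distrib Q.sumA Q.sumB)
  qed
  have Sc_eq: "Sc I x n = (\<Sum>k=0..n. Q.Af k + Q.Bf k)" unfolding Sc_Tc using Tck Jn by simp
  have Tid: "D * Sc I x n = Q.Af J + Q.Bf J - (a0 + b0) - q * Q.Af n"
    using Q.Tid[of n] be1 Jn Sc_eq by simp
  have Seq: "lam - D * Sc I x n = q * Q.Af J"
  proof -
    have "Q.Bf J = Q.Bf (Suc J) - Q.bf (Suc J)" by (simp add: Q.bf_Sucn)
    moreover have "Q.Af J = Q.Af n + Q.af J" using Q.Af_Suc Jn by simp
    moreover have "a0 + b0 = 1 - lam" unfolding b0_def by simp
    ultimately show ?thesis using Tid Tot C by (simp add: algebra_simps)
  qed
  have Sle: "real d * Sc I x n \<le> 1"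
  proof -
    have "0 \<le> q * Q.Af J" using q0 colJ cpos by simp
    then have "lam * (real d * Sc I x n) \<le> lam * 1" using Seq unfolding D_def by (simp add: algebra_simps)
    then show ?thesis using lam0 by simp
  qed
  have Rn: "Rfun lam d I x n = lam - D * Sc I x n"
    using Sle Jn lam0 unfolding D_def by (simp add: S.R_shape algebra_simps)
  have qq: "S.q = q" unfolding S.q_def using Rn Seq colJ cpos Jn by simp
  have Sk: "real d * Sc I x k \<le> 1" if "k < J" for k
    using Sle Sc_mono[OF sx, of k n] that Jn d2 by (smt (verit) less_Suc_eq_le mult_left_mono of_nat_0_le_iff)
  have R0: "Rfun lam d I x 0 = lam - D * row I x 0"
    using Sk[of 0] J1 lam0 unfolding D_def by (simp add: S.R_shape Sc_0 algebra_simps)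
  have Gk: "Gfun lam d I x k = D * Tc I x k" if "k < J" for k
    using Sk[of k] that unfolding D_def by (simp add: S.G_shape)
  have dr: "drift lam d I x i j = 0" if ij: "i \<le> j" "j \<le> I" for i j
  proof -
    consider "j < J" | "j = J" | "j = Suc J" | "Suc J < j" by linarith
    then show ?thesis
    proof cases
      case 1
      show ?thesis
      proof (cases "i < j")
        case True then show ?thesis using S.drift_zero_off[OF JI] 1 ij by simp
      next
        case False
        then have ii: "i = j" using ij by simp
        consider "j = 0" | "j = 1" | "2 \<le> j" by linarith
        then show ?thesis
        proof cases
          case 1 then show ?thesis using ii S.drift_00 R0 unfolding D_def by simp
        next
          case 2 then show ?thesis using ii S.drift_11 \<open>j < J\<close> R0 Gk[of 1] Tc_Suc[of I x 0]
            unfolding D_def by (simp add: Tc_0 algebra_simps)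
        next
          case 3
          have "Tc I x j = Tc I x (j-1) + row I x j" using Tc_Suc[of I x "j-1"] 3 by simp
          moreover have "j - 1 < J" using \<open>j < J\<close> by simp
          ultimately show ?thesis using ii S.drift_kk[OF 3 \<open>j < J\<close>] Gk[of j] Gk[of "j-1"] \<open>j < J\<close>
            by (simp add: algebra_simps D_def)
        qed
      qed
    next
      case 2
      show ?thesis
      proof (cases "i < J")
        case True
        then have "drift lam d I x i J = Q.af (i+1) - (if i>0 then Q.af i else 0) - D * Q.af i - q * Q.af i"
          using S.drift_colm[OF JI True] qq by (simp add: xd D_def)
        also have "\<dots> = 0"
        proof (cases "i = 0")
          case True then show ?thesis using Q.af_1 be1(3) Q.af_0 by (simp add: algebra_simps)
        next
          case False then show ?thesis using Q.af_Suc[of i] be1 by (simp add: al_def D_def algebra_simps)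
        qed
        finally show ?thesis using 2 by simp
      next
        case False
        then have ii: "i = J" using ij 2 by simp
        have "drift lam d I x J J = - Q.af J + D * Q.bf J - q * Q.af J
           + (if J = 1 then lam - Rfun lam d I x 0 else Gfun lam d I x (J-1))"
          using S.drift_diagm[OF JI] qq by (simp add: xd D_def)
        also have "(if J = 1 then lam - Rfun lam d I x 0 else Gfun lam d I x (J-1)) = D * (Q.Af n + Q.Bf n)"
        proof (cases "J = 1")
          case True then show ?thesis using R0 row[of 0] Jn Q.sumA[of 0] Q.sumB[of 0]
            by (simp add: Q.af_0 Q.bf_0 Q.Af_eq Q.Bf0)
        next
          case False then show ?thesis using Gk[of n] Tck[of n] Jn by simp
        qed
        also have "- Q.af J + D * Q.bf J - q * Q.af J + D * (Q.Af n + Q.Bf n) = 0"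
          using Dg Jn by (simp add: Q.bf_Sucn algebra_simps)
        finally show ?thesis using ii 2 by simp
      qed
    next
      case 3
      show ?thesis
      proof (cases "i < Suc J")
        case True
        then have "drift lam d I x i (Suc J) = Q.bf (i+1) - (if i>0 then Q.bf i else 0) - D * Q.bf i
            + (if i > 0 then q * Q.af (i-1) else 0)"
        proof -
          have h: "x (i-1) J = Q.af (i-1)" "x i (Suc J) = Q.bf i" "x (i+1) (Suc J) = Q.bf (i+1)"
            using True by (simp_all add: xd) (auto simp: xd)
          show ?thesis using S.drift_colm1[OF JI True] qq unfolding h by (simp add: D_def)
        qed
        also have "\<dots> = 0"
        proof (cases i)
          case 0 then show ?thesis using Q.bf_1 be1 by (simp add: Q.bf_0)
        next
          case (Suc k) then show ?thesis using Q.bf_SS[of k] be1 by (simp add: be_def D_def algebra_simps)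
        qed
        finally show ?thesis using 3 by simp
      next
        case False
        then have "i = Suc J" using ij 3 by simp
        then show ?thesis using S.drift_diagm1[OF JI] qq C 3 by (simp add: xd)
      qed
    next
      case 4
      show ?thesis
      proof (cases "i < j")
        case True then show ?thesis using S.drift_zero_off[OF JI] 4 ij by simp
      next
        case False then show ?thesis using S.drift_zero_diag[OF JI] 4 ij by simp
      qed
    qed
  qed
  show "fixed_point lam d I (Xf lam d J q)" using sx dr unfolding fixed_point_def x_def by auto
  show "col (Xf lam d J q) J + col (Xf lam d J q) (Suc J) = 1"
    using colJ colJ1 Tot unfolding x_def by simp
qed


lemma a0f_pos: assumes lam0: "0 < lam" and d2: "2 \<le> d"
  and in2: "1 < (1 + lam * real d)^(Suc J) * (1 - lam)"
  shows "0 < a0f lam d J"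
proof -
  define be where "be = 1 + lam * real d"
  have D: "0 < lam * real d" using lam0 d2 by simp
  have P: "0 < be^J" unfolding be_def using D by simp
  have "1 / be^J < be * (1 - lam)"
  proof -
    have "1 < be * (1 - lam) * be^J" using in2 unfolding be_def by (simp add: algebra_simps)
    then have "1 / be^J < be * (1 - lam) * be^J / be^J" using P by (intro divide_strict_right_mono)
    moreover have "be \<noteq> 0" unfolding be_def using D by simp
    ultimately show ?thesis using P by simp
  qed
  then show ?thesis unfolding a0f_def be_def[symmetric] using D by simp
qed

lemma exist0:
  fixes lam :: real and d I :: nat
  assumes lam0: "0 < lam" and lam1: "lam < 1" and d2: "2 \<le> d" and I1: "1 < I"
    and in2: "1 < (1 + lam * real d) * (1 - lam)"
  shows "fixed_point lam d I (Xf lam d 0 0)"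
    and "col (Xf lam d 0 0) 0 + col (Xf lam d 0 0) (Suc 0) = 1"
proof -
  define x where "x = Xf lam d 0 0"
  define D where "D = lam * real d"
  define a0 where "a0 = a0f lam d 0"
  have Dp: "0 < D" unfolding D_def using lam0 d2 by simp
  have a0p: "0 < a0" unfolding a0_def using a0f_pos[of lam d 0] lam0 d2 in2 by simp
  have Db: "D * (1 - lam - a0) = lam" unfolding a0_def a0f_def D_def[symmetric] using Dp
    by (simp add: field_simps)
  have xd: "x i j = (if j = 0 \<and> i = 0 then a0 else if j = 1 \<and> i = 0 then 1 - lam - a0
      else if j = 1 \<and> i = 1 then lam else 0)" for i j
  proof -
    have "seqs.bf (1 + D) (1 + D) a0 (1 - lam - a0) 1 = D * (1 - lam - a0)"
      by (simp add: seqs.bf_Sucn seqs.Bf_def algebra_simps)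
    then show ?thesis unfolding x_def Xf_def D_def[symmetric] a0_def[symmetric] using Db
      by (auto simp: seqs.af_0 seqs.bf_0)
  qed
  have b0: "0 \<le> 1 - lam - a0"
  proof -
    have "0 \<le> D * (1 - lam - a0)" using Db lam0 by simp
    then show ?thesis using Dp by (simp add: zero_le_mult_iff)
  qed
  have xnn: "0 \<le> x i j" for i j using a0p b0 lam0 by (simp add: xd)
  have xout: "x i j = 0" if "\<not> (i \<le> j \<and> j \<le> I)" for i j using that I1 by (auto simp: xd)
  have c0: "col x 0 = a0" "col x 1 = 1 - a0" by (simp_all add: col_def xd)
  have colo: "col x j = 0" if "j \<noteq> 0" "j \<noteq> 1" for j using that unfolding col_def by (simp add: xd)
  have sx: "x \<in> simplexS I"
  proof -
    have "(\<Sum>i=0..I. \<Sum>j=i..I. x i j) = (\<Sum>j=0..I. col x j)" by (rule total_col') (rule xout)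
    also have "\<dots> = (\<Sum>j\<in>{0, 1}. col x j)"
      using I1 colo by (intro sum.mono_neutral_right) auto
    also have "\<dots> = 1" using c0 by simp
    finally show ?thesis unfolding simplexS_def using xnn xout by auto
  qed
  have shx: "shape 0 x" unfolding shape_def by (auto simp: xd split: if_splits)
  interpret S: shp I 0 x using sx shx c0 a0p I1 by unfold_locales auto
  have dr: "drift lam d I x i j = 0" if "i \<le> j" "j \<le> I" for i j
    using S.drift_m0[of i j lam d] that I1 Db unfolding D_def by (simp add: xd)
  show "fixed_point lam d I (Xf lam d 0 0)" using sx dr unfolding fixed_point_def x_def by auto
  show "col (Xf lam d 0 0) 0 + col (Xf lam d 0 0) (Suc 0) = 1" using c0 unfolding x_def by simp
qed

lemma exq:
  fixes lam :: real and d J :: nat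
  assumes lam0: "0 < lam" and lam1: "lam < 1" and d2: "2 \<le> d" and J1: "1 \<le> J"
    and in1: "(1 + lam * real d)^J * (1 - lam) \<le> 1" and in2: "1 < (1 + lam * real d)^(Suc J) * (1 - lam)"
  shows "\<exists>q \<ge> 0. E3 lam d J q"
proof -
  define D where "D = lam * real d"
  define be where "be = 1 + D"
  define a0 where "a0 = a0f lam d J"
  define f where "f q = (D + q) * (1 + D + q)^(J - 1) * a0 * be * (1 + q)" for q
  have Dp: "0 < D" unfolding D_def using lam0 d2 by simp
  have a0p: "0 < a0" unfolding a0_def using a0f_pos lam0 d2 in2 by simp
  have bep: "0 < be" "1 \<le> be" unfolding be_def using Dp by auto
  have P: "0 < be^J" using bep by simp
  have f0: "f 0 \<le> D"
  proof -
    have "D * a0 = be * (1 - lam) - 1 / be^J" unfolding a0_def a0f_def be_def D_def using Dp d2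
      unfolding D_def by simp
    then have "D * a0 * be^J = (be * (1 - lam) - 1 / be^J) * be^J" by simp
    also have "\<dots> = be * (be^J * (1 - lam)) - 1" using P bep by (simp add: left_diff_distrib algebra_simps)
    also have "\<dots> \<le> be - 1"
    proof -
      have "be * (be^J * (1 - lam)) \<le> be * 1" using in1 bep unfolding be_def D_def by (intro mult_left_mono) auto
      then show ?thesis by simp
    qed
    finally have "D * a0 * be^J \<le> D" unfolding be_def by simp
    moreover have "f 0 = D * a0 * be^J"
    proof -
      have "be^J = be^(J-1) * be" using J1 by (metis Suc_diff_1 less_le_trans less_numeral_extra(1) power_Suc2 le_neq_implies_less)
      then show ?thesis unfolding f_def be_def by (simp add: algebra_simps)
    qed
    ultimately show ?thesis by simp
  qed
  define Q where "Q = D / (a0 * be)"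
  have Qp: "0 \<le> Q" unfolding Q_def using Dp a0p bep by simp
  have fQ: "D \<le> f Q"
  proof -
    have p1: "1 \<le> (1 + D + Q)^(J-1)" using Dp Qp by (intro one_le_power) simp
    have "Q \<le> (D + Q) * (1 + D + Q)^(J-1) * (1 + Q)"
    proof -
      have "Q \<le> (D + Q) * (1 + D + Q)^(J-1)" using p1 Dp Qp
        by (metis add_increasing le_add_same_cancel2 less_le mult_1_right mult_left_mono order.trans)
      also have "\<dots> = (D + Q) * (1 + D + Q)^(J-1) * 1" by simp
      also have "\<dots> \<le> (D + Q) * (1 + D + Q)^(J-1) * (1 + Q)"
        using Qp Dp p1 by (intro mult_left_mono) auto
      finally show ?thesis .
    qed
    then have "Q * (a0 * be) \<le> (D + Q) * (1 + D + Q)^(J-1) * (1 + Q) * (a0 * be)"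
      using a0p bep by (intro mult_right_mono) auto
    moreover have "Q * (a0 * be) = D" unfolding Q_def using a0p bep by simp
    ultimately show ?thesis unfolding f_def by (simp add: algebra_simps)
  qed
  have cont: "continuous_on {0..Q} f" unfolding f_def by (intro continuous_intros)
  obtain q where q: "0 \<le> q" "q \<le> Q" "f q = D" using IVT'[of f 0 D Q, OF f0 fQ Qp cont] by blast
  have "E3 lam d J q" using q(3) unfolding E3_def f_def D_def be_def a0_def by (simp add: algebra_simps)
  then show ?thesis using q(1) by blast
qed

lemma E3_inj:
  fixes lam :: real and d J :: nat
  assumes lam0: "0 < lam" and d2: "2 \<le> d" and a0p: "0 < a0f lam d J"
    and q1: "0 \<le> q1" "E3 lam d J q1" and q2: "0 \<le> q2" "E3 lam d J q2"
  shows "q1 = q2"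
proof -
  define D where "D = lam * real d"
  define c where "c = a0f lam d J * (1 + D)"
  define f where "f q = (D + q) * (1 + D + q)^(J - 1) * c * (1 + q)" for q
  have Dp: "0 < D" unfolding D_def using lam0 d2 by simp
  have cp: "0 < c" unfolding c_def using a0p Dp by simp
  have fq: "f q1 = D" "f q2 = D" using q1 q2 unfolding E3_def f_def c_def D_def by (simp_all add: algebra_simps)
  have mono: "f a < f b" if "0 \<le> a" "a < b" for a b
  proof -
    have "(D + a) * (1 + D + a)^(J - 1) < (D + b) * (1 + D + b)^(J - 1)"
      using that Dp by (intro mult_less_le_imp_less power_mono) auto
    then have h: "(D + a) * (1 + D + a)^(J - 1) * c < (D + b) * (1 + D + b)^(J - 1) * c"
      using cp by simp
    have "0 \<le> (D + a) * (1 + D + a)^(J - 1) * c" using that Dp cp by simp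
    then show ?thesis unfolding f_def using h that
      by (intro mult_less_le_imp_less[OF h]) auto
  qed
  show ?thesis
  proof (rule ccontr)
    assume "q1 \<noteq> q2"
    then have "q1 < q2 \<or> q2 < q1" by auto
    then show False using mono[of q1 q2] mono[of q2 q1] q1 q2 fq by auto
  qed
qed


lemma floor_char:
  fixes lam be :: real and js :: nat
  assumes lam0: "0 < lam" and lam1: "lam < 1" and be1: "1 < be"
    and js: "js = nat \<lfloor>- ln (1 - lam) / ln be\<rfloor>"
  shows "be^js * (1 - lam) \<le> 1" "1 < be^(Suc js) * (1 - lam)"
proof -
  define L where "L = - ln (1 - lam) / ln be"
  have lb: "0 < ln be" using be1 by simp
  have ll: "ln (1 - lam) < 0" using lam0 lam1 by simp
  have L0: "0 \<le> L" unfolding L_def using lb ll by (intro divide_nonneg_pos) auto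
  have jsL: "real js = of_int \<lfloor>L\<rfloor>" unfolding js L_def[symmetric] using L0 by simp
  have f1: "real js \<le> L" using jsL by linarith
  have f2: "L < real js + 1" using jsL by linarith
  have Lb: "L * ln be = - ln (1 - lam)" unfolding L_def using lb by simp
  have pw: "be^k * (1 - lam) = exp (real k * ln be + ln (1 - lam))" for k
  proof -
    have "be^k = exp (real k * ln be)" using be1 by (simp add: exp_of_nat_mult)
    moreover have "1 - lam = exp (ln (1 - lam))" using lam1 by simp
    ultimately show ?thesis by (simp add: exp_add)
  qed
  have "real js * ln be \<le> L * ln be" using f1 lb by (intro mult_right_mono) auto
  then have "real js * ln be + ln (1 - lam) \<le> 0" using Lb by simp
  then show "be^js * (1 - lam) \<le> 1" unfolding pw by simp
  have "L * ln be < (real js + 1) * ln be" using f2 lb by (intro mult_strict_right_mono) auto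
  then have "0 < real (Suc js) * ln be + ln (1 - lam)" using Lb by (simp add: algebra_simps)
  then show "1 < be^(Suc js) * (1 - lam)" unfolding pw by simp
qed

lemma m_unique:
  fixes lam be :: real and js m :: nat
  assumes lam1: "lam < 1" and be1: "1 \<le> be"
    and a: "be^js * (1 - lam) \<le> 1" "1 < be^(Suc js) * (1 - lam)"
    and b: "be^m * (1 - lam) \<le> 1" "1 < be^(Suc m) * (1 - lam)"
  shows "m = js"
proof (rule ccontr)
  assume "m \<noteq> js"
  then consider "Suc m \<le> js" | "Suc js \<le> m" by linarith
  then show False
  proof cases
    case 1
    have "be^(Suc m) * (1 - lam) \<le> be^js * (1 - lam)"
      using 1 be1 lam1 by (intro mult_right_mono power_increasing) auto
    then show False using a b by simp
  next
    case 2
    have "be^(Suc js) * (1 - lam) \<le> be^m * (1 - lam)"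
      using 2 be1 lam1 by (intro mult_right_mono power_increasing) auto
    then show False using a b by simp
  qed
qed

theorem theorem2:
  fixes lam :: real and d I js :: nat
  assumes "0 < lam" "lam < 1" "2 \<le> d" "1 < I"
    and "js = nat \<lfloor>- ln (1 - lam) / ln (lam * real d + 1)\<rfloor>"
    and "js < I"
  shows "\<exists>x. fixed_point lam d I x
            \<and> (\<forall>y. fixed_point lam d I y \<longrightarrow> y = x)
            \<and> col x js + col x (js+1) = 1
            \<and> (\<forall>i j. j \<noteq> js \<and> j \<noteq> js + 1 \<longrightarrow> x i j = 0)
            \<and> lam * real d * x 0 js = (1 + lam * real d) * (1 - lam) - 1 / (1 + lam * real d) ^ js
            \<and> x 0 js + x 0 (js+1) = 1 - lam"
proof -
  note lam0 = assms(1) and lam1 = assms(2) and d2 = assms(3) and I1 = assms(4) and jsI = assms(6)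
  define be where "be = 1 + lam * real d"
  have Dp: "0 < lam * real d" using lam0 d2 by simp
  have be1: "1 < be" unfolding be_def using Dp by simp
  have jsd: "js = nat \<lfloor>- ln (1 - lam) / ln be\<rfloor>" using assms(5) unfolding be_def by (simp add: add.commute)
  note fl = floor_char[OF lam0 lam1 be1 jsd]
  have mch: "m = js" if "be^m * (1 - lam) \<le> 1" "1 < be^(Suc m) * (1 - lam)" for m
    using m_unique[OF lam1 _ fl that] be1 by simp
  have classify: "(js = 0 \<and> y = Xf lam d 0 0) \<or> (1 \<le> js \<and> (\<exists>q\<ge>0. E3 lam d js q \<and> y = Xf lam d js q))"
    if fy: "fixed_point lam d I y" for y
  proof -
    interpret F: fpt lam d I y using lam0 lam1 d2 I1 fy by unfold_locales
    consider "F.m = 0" | "1 \<le> F.m" "Suc F.m \<le> I" | "F.m = I" using F.mI by linarith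
    then show ?thesis
    proof cases
      case 1
      then have "1 < be * (1 - lam)" "y = Xf lam d 0 0" using F.U0 unfolding be_def by auto
      moreover have "be^0 * (1 - lam) \<le> 1" using lam0 by simp
      ultimately have "js = 0" using mch[of 0] by simp
      then show ?thesis using \<open>y = Xf lam d 0 0\<close> by simp
    next
      case 2
      from F.U1[OF 2] have "F.m = js" and ex: "\<exists>q\<ge>0. E3 lam d F.m q \<and> y = Xf lam d F.m q"
        using mch unfolding be_def by auto
      then show ?thesis using 2 by auto
    next
      case 3
      have "be^I * (1 - lam) \<le> 1" using F.UI[OF 3] unfolding be_def .
      moreover have "be^(Suc js) * (1 - lam) \<le> be^I * (1 - lam)"
        using jsI be1 lam1 by (intro mult_right_mono power_increasing) auto
      ultimately show ?thesis using fl by simp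
    qed
  qed
  have a0x: "Xf lam d js q 0 js = a0f lam d js" "Xf lam d js q 0 (js+1) = 1 - lam - a0f lam d js" for q
    unfolding Xf_def by (simp_all add: seqs.af_0 seqs.bf_0)
  have a0e: "lam * real d * a0f lam d js = (1 + lam * real d) * (1 - lam) - 1 / (1 + lam * real d) ^ js"
    unfolding a0f_def using Dp d2 by simp
  have zx: "Xf lam d js q i j = 0" if "j \<noteq> js" "j \<noteq> js + 1" for q i j using that unfolding Xf_def by simp
  show ?thesis
  proof (cases "js = 0")
    case True
    have in2: "1 < (1 + lam * real d) * (1 - lam)" using fl(2) True unfolding be_def by simp
    note ex = exist0[OF lam0 lam1 d2 I1 in2]
    show ?thesis
    proof (intro exI[of _ "Xf lam d 0 0"] conjI allI impI)
      show "fixed_point lam d I (Xf lam d 0 0)" by (rule ex(1))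
      show "y = Xf lam d 0 0" if "fixed_point lam d I y" for y using classify[OF that] True by auto
      show "col (Xf lam d 0 0) js + col (Xf lam d 0 0) (js + 1) = 1" using ex(2) True by simp
      show "Xf lam d 0 0 i j = 0" if "j \<noteq> js \<and> j \<noteq> js + 1" for i j using zx[of j 0 i] that True by simp
      show "lam * real d * Xf lam d 0 0 0 js = (1 + lam * real d) * (1 - lam) - 1 / (1 + lam * real d) ^ js"
        using a0x[of 0] a0e True by simp
      show "Xf lam d 0 0 0 js + Xf lam d 0 0 0 (js + 1) = 1 - lam" using a0x[of 0] True by simp
    qed
  next
    case False
    then have J1: "1 \<le> js" by simp
    have in1: "(1 + lam * real d)^js * (1 - lam) \<le> 1" and in2: "1 < (1 + lam * real d)^(Suc js) * (1 - lam)"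
      using fl unfolding be_def by auto
    obtain q where q: "0 \<le> q" "E3 lam d js q" using exq[OF lam0 lam1 d2 J1 in1 in2] by blast
    have JI: "Suc js \<le> I" using jsI by simp
    note ex = exist1[OF lam0 lam1 d2 I1 J1 JI in1 in2 q]
    have a0p: "0 < a0f lam d js" using a0f_pos[OF lam0 d2 in2] .
    show ?thesis
    proof (intro exI[of _ "Xf lam d js q"] conjI allI impI)
      show "fixed_point lam d I (Xf lam d js q)" by (rule ex(1))
      show "y = Xf lam d js q" if fy: "fixed_point lam d I y" for y
      proof -
        obtain q' where q': "0 \<le> q'" "E3 lam d js q'" "y = Xf lam d js q'" using classify[OF fy] False by auto
        have "q' = q" using E3_inj[OF lam0 d2 a0p q'(1,2) q] .
        then show ?thesis using q' by simp
      qed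
      show "col (Xf lam d js q) js + col (Xf lam d js q) (js + 1) = 1" using ex(2) by simp
      show "Xf lam d js q i j = 0" if "j \<noteq> js \<and> j \<noteq> js + 1" for i j using zx that by simp
      show "lam * real d * Xf lam d js q 0 js = (1 + lam * real d) * (1 - lam) - 1 / (1 + lam * real d) ^ js"
        using a0x a0e by simp
      show "Xf lam d js q 0 js + Xf lam d js q 0 (js + 1) = 1 - lam" using a0x by simp
    qed
  qed
qed


end
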